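(* Let $G=(V,E)$ be an $n$-node graph, $\mathcal{C}$ a clustering of $G$ produced by $\mathbf{cluster}(G,e)$ for some integer $e\ge 1$, and $d,m$ positive integers. Let $H$ be the subgraph of $G$ on vertex set $V$ containing exactly the edges of $\mathbf{multspan}(G)$ and the edges of the paths in $\mathcal{S} = \mathbf{createStrips}(G, \mathcal{C}, d, m)$. Let $u,v\in V$ be such that $\rho_G(u,v)$ intersects exactly $k$ clean clusters and fewer than $\frac{k}{2}$ strips. Then $\delta_G(u,v) \ge \Omega\!\left(\frac{kd}{m}\right)$.
   Context: $G$ is unweighted and undirected; $\delta_G$ is shortest-path distance; the constant in $\Omega(\cdot)$ is absolute. For each pair of nodes $u,v$ a shortest path $\rho_G(u,v)$ is fixed, the choice being consistent and such that any two chosen shortest paths intersect on at most one (contiguous) subpath. $\mathbf{multspan}(G)$ is the subgraph produced by the greedy multiplicative spanner algorithm of Althöfer et al. with parameter $\log n$ ($O(n)$ edges, multiplicative stretch $2\log n -1$). The procedure $\mathbf{cluster}(G,e)$: initialize $\mathcal{C} = \emptyset$, unmark all nodes; while there is an unmarked node $u$ with at least $e-1$ unmarked neighbors, let $C$ be $u$ together with any $e-1$ of its unmarked neighbors, mark all nodes of $C$, add $C$ to $\mathcal{C}$; return $\mathcal{C}$. Elements of $\mathcal{C}$ are clusters. The procedure $\mathbf{createStrips}(G,\mathcal{C},d,m)$: initialize $\mathcal{S}=\emptyset$; while there exist $u,v \in V$ such that (1) $\delta_G(u,v) \le d$, (2) $\rho_G(u,v)$ intersects (shares a node with) at most $m$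 different paths in $\mathcal{S}$, and (3) $\rho_G(u,v)$ intersects exactly $m$ clusters that share no node with any path in $\mathcal{S}$, add $\rho_G(u,v)$ to $\mathcal{S}$; return $\mathcal{S}$. The paths in $\mathcal{S}$ are strips. A cluster is clean if it shares no node with any strip. A path intersects a strip or cluster if they share a node.
   Formalization: The positive integer m is also at most k, the number of clean clusters that $\rho_G(u,v)$ intersects. The statement above fails without it. *)

theory Defs
  imports Main "HOL-Library.Extended_Nat"
begin

definition sgraph :: "nat set \<Rightarrow> (nat \<Rightarrow> nat \<Rightarrow> bool) \<Rightarrow> bool" where
  "sgraph V E \<longleftrightarrow> finite V \<and> (\<forall>x y. E x y \<longrightarrow> x \<in> V \<and> y \<in> V \<and> x \<noteq> y \<and> E y x)"

definition walk :: "nat set \<Rightarrow> (nat \<Rightarrow> nat \<Rightarrow> bool) \<Rightarrow> nat list \<Rightarrow> bool" where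
  "walk V E xs \<longleftrightarrow> xs \<noteq> [] \<and> set xs \<subseteq> V \<and> (\<forall>i. Suc i < length xs \<longrightarrow> E (xs ! i) (xs ! Suc i))"

text \<open>Shortest-path distance (infinity if not connected).\<close>
definition gdist :: "nat set \<Rightarrow> (nat \<Rightarrow> nat \<Rightarrow> bool) \<Rightarrow> nat \<Rightarrow> nat \<Rightarrow> enat" where
  "gdist V E u v = (INF xs \<in> {xs. walk V E xs \<and> hd xs = u \<and> last xs = v}. enat (length xs - 1))"

text \<open>The fixed family of shortest paths rho(u,v): shortest paths, consistent (subpaths of chosen
  paths are the chosen paths, and rho(v,u) is rho(u,v) reversed), and any two chosen paths
  intersect in at most one contiguous subpath.\<close>
definition sp_system :: "nat set \<Rightarrow> (nat \<Rightarrow> nat \<Rightarrow> bool) \<Rightarrow> (nat \<Rightarrow> nat \<Rightarrow> nat list) \<Rightarrow> bool" where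
  "sp_system V E rho \<longleftrightarrow>
     (\<forall>u\<in>V. \<forall>v\<in>V. gdist V E u v \<noteq> \<infinity> \<longrightarrow>
        walk V E (rho u v) \<and> hd (rho u v) = u \<and> last (rho u v) = v \<and>
        enat (length (rho u v) - 1) = gdist V E u v \<and>
        rho v u = rev (rho u v) \<and>
        (\<forall>i j. i \<le> j \<and> j < length (rho u v) \<longrightarrow>
           rho (rho u v ! i) (rho u v ! j) = take (Suc (j - i)) (drop i (rho u v))) \<and>
        (\<forall>x\<in>V. \<forall>y\<in>V. gdist V E x y \<noteq> \<infinity> \<longrightarrow>
           (\<exists>i j. set (rho u v) \<inter> set (rho x y) = {rho u v ! l | l. i \<le> l \<and> l < j})))"

text \<open>Possible outputs of the nondeterministic procedure cluster(G,e): the list of clusters in the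
  order they are created; marked nodes are those in earlier clusters.\<close>
definition cluster_output :: "nat set \<Rightarrow> (nat \<Rightarrow> nat \<Rightarrow> bool) \<Rightarrow> nat \<Rightarrow> nat set set \<Rightarrow> bool" where
  "cluster_output V E e Cs \<longleftrightarrow> (\<exists>cl.
     (\<forall>i < length cl. \<exists>u N.
        u \<in> V - \<Union>(set (take i cl)) \<and>
        N \<subseteq> {w \<in> V. E u w} - \<Union>(set (take i cl)) \<and> card N = e - 1 \<and>
        cl ! i = insert u N) \<and>
     \<not> (\<exists>u \<in> V - \<Union>(set cl). card ({w \<in> V. E u w} - \<Union>(set cl)) \<ge> e - 1) \<and>
     Cs = set cl)"

definition strip_addable ::
  "nat set \<Rightarrow> (nat \<Rightarrow> nat \<Rightarrow> bool) \<Rightarrow> (nat \<Rightarrow> nat \<Rightarrow> nat list) \<Rightarrow> nat set set \<Rightarrow> nat \<Rightarrow> nat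
    \<Rightarrow> nat list set \<Rightarrow> nat \<Rightarrow> nat \<Rightarrow> bool" where
  "strip_addable V E rho Cs d m S u v \<longleftrightarrow>
     u \<in> V \<and> v \<in> V \<and> gdist V E u v \<le> enat d \<and>
     card {P \<in> S. set (rho u v) \<inter> set P \<noteq> {}} \<le> m \<and>
     card {C \<in> Cs. C \<inter> set (rho u v) \<noteq> {} \<and> (\<forall>P\<in>S. C \<inter> set P = {})} = m"

text \<open>Possible outputs of the nondeterministic procedure createStrips(G,C,d,m).\<close>
definition strips_output ::
  "nat set \<Rightarrow> (nat \<Rightarrow> nat \<Rightarrow> bool) \<Rightarrow> (nat \<Rightarrow> nat \<Rightarrow> nat list) \<Rightarrow> nat set set \<Rightarrow> nat \<Rightarrow> nat
    \<Rightarrow> nat list set \<Rightarrow> bool" where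
  "strips_output V E rho Cs d m S \<longleftrightarrow> (\<exists>sl.
     (\<forall>i < length sl. \<exists>u v. strip_addable V E rho Cs d m (set (take i sl)) u v \<and> sl ! i = rho u v) \<and>
     \<not> (\<exists>u v. strip_addable V E rho Cs d m (set sl) u v) \<and>
     S = set sl)"

definition clean :: "nat list set \<Rightarrow> nat set \<Rightarrow> bool" where
  "clean S C \<longleftrightarrow> (\<forall>P\<in>S. C \<inter> set P = {})"

end

theory Submission
  imports Defs
begin

definition fc :: "nat list \<Rightarrow> nat set set \<Rightarrow> nat \<Rightarrow> nat \<Rightarrow> nat" where
 "fc p Cl a b = card {C \<in> Cl. C \<inter> (\<lambda>i. p!i) ` {a..<b} \<noteq> {}}"
definition gs :: "nat list \<Rightarrow> nat list set \<Rightarrow> nat \<Rightarrow> nat \<Rightarrow> nat" where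
 "gs p St a b = card {P \<in> St. set P \<inter> (\<lambda>i. p!i) ` {a..<b} \<noteq> {}}"

locale pc =
  fixes p :: "nat list" and Cl :: "nat set set" and St :: "nat list set" and m d :: nat
  assumes finCl: "finite Cl" and finSt: "finite St"
  and disj: "\<And>C1 C2 x. C1 \<in> Cl \<Longrightarrow> C2 \<in> Cl \<Longrightarrow> x \<in> C1 \<Longrightarrow> x \<in> C2 \<Longrightarrow> C1 = C2"
  and cln: "\<And>C P. C \<in> Cl \<Longrightarrow> P \<in> St \<Longrightarrow> C \<inter> set P = {}"
  and contig: "\<And>P x y z. P \<in> St \<Longrightarrow> x < y \<Longrightarrow> y < z \<Longrightarrow> z < length p \<Longrightarrow> p!x \<in> set P \<Longrightarrow> p!z \<in> set P \<Longrightarrow> p!y \<in> set P"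
  and key: "\<And>a b. a < b \<Longrightarrow> b \<le> length p \<Longrightarrow> fc p Cl a b = m \<Longrightarrow> gs p St a b \<le> m \<Longrightarrow> d + 2 \<le> b - a"
  and m1: "m \<ge> 1"
begin

lemma fc_split: assumes "a \<le> j" "j \<le> b" shows "fc p Cl a b \<le> fc p Cl a j + fc p Cl j b"
proof -
  have "{C \<in> Cl. C \<inter> (\<lambda>i. p!i) ` {a..<b} \<noteq> {}} \<subseteq> {C \<in> Cl. C \<inter> (\<lambda>i. p!i) ` {a..<j} \<noteq> {}} \<union> {C \<in> Cl. C \<inter> (\<lambda>i. p!i) ` {j..<b} \<noteq> {}}"
  proof
    fix C assume "C \<in> {C \<in> Cl. C \<inter> (\<lambda>i. p!i) ` {a..<b} \<noteq> {}}"
    then obtain i where C: "C \<in> Cl" "i \<in> {a..<b}" "p!i \<in> C" by blast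
    show "C \<in> {C \<in> Cl. C \<inter> (\<lambda>i. p!i) ` {a..<j} \<noteq> {}} \<union> {C \<in> Cl. C \<inter> (\<lambda>i. p!i) ` {j..<b} \<noteq> {}}"
    proof (cases "i < j")
      case True then have "i \<in> {a..<j}" using C by simp
      then show ?thesis using C by blast
    next
      case False then have "i \<in> {j..<b}" using C by simp
      then show ?thesis using C by blast
    qed
  qed
  then have "fc p Cl a b \<le> card ({C \<in> Cl. C \<inter> (\<lambda>i. p!i) ` {a..<j} \<noteq> {}} \<union> {C \<in> Cl. C \<inter> (\<lambda>i. p!i) ` {j..<b} \<noteq> {}})"
    unfolding fc_def by (intro card_mono) (use finCl in auto)
  also have "\<dots> \<le> fc p Cl a j + fc p Cl j b" unfolding fc_def by (rule card_Un_le)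
  finally show ?thesis .
qed

lemma fc_empty: "b \<le> a \<Longrightarrow> fc p Cl a b = 0"
  unfolding fc_def by simp

lemma fc_single: "fc p Cl j (Suc j) \<le> 1"
proof -
  have "{C \<in> Cl. C \<inter> (\<lambda>i. p!i) ` {j..<Suc j} \<noteq> {}} = {C \<in> Cl. p!j \<in> C}" by auto
  moreover have "card {C \<in> Cl. p!j \<in> C} \<le> Suc 0"
    using finCl disj by (subst card_le_Suc0_iff_eq) auto
  ultimately show ?thesis unfolding fc_def by simp
qed

lemma fc_single_pos: "1 \<le> fc p Cl j (Suc j) \<Longrightarrow> \<exists>C\<in>Cl. p!j \<in> C"
proof -
  assume "1 \<le> fc p Cl j (Suc j)"
  then have "{C \<in> Cl. C \<inter> (\<lambda>i. p!i) ` {j..<Suc j} \<noteq> {}} \<noteq> {}" unfolding fc_def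
    by (metis card.empty not_one_le_zero)
  then show ?thesis by auto
qed

lemma gs_mono: "a \<le> a' \<Longrightarrow> b' \<le> b \<Longrightarrow> gs p St a' b' \<le> gs p St a b"
  unfolding gs_def by (intro card_mono) (use finSt in auto)

lemma gs_disj: assumes "a \<le> j" "j \<le> t" "t < b" "b \<le> length p" "C \<in> Cl" "p!t \<in> C"
  shows "gs p St a j + gs p St (Suc t) b \<le> gs p St a b"
proof -
  let ?X = "{P \<in> St. set P \<inter> (\<lambda>i. p!i) ` {a..<j} \<noteq> {}}"
  let ?Y = "{P \<in> St. set P \<inter> (\<lambda>i. p!i) ` {Suc t..<b} \<noteq> {}}"
  have "?X \<inter> ?Y = {}"
  proof (rule ccontr)
    assume "?X \<inter> ?Y \<noteq> {}"
    then obtain P x z where P: "P \<in> St" "x \<in> {a..<j}" "p!x \<in> set P" "z \<in> {Suc t..<b}" "p!z \<in> set P" by blast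
    then have "p!t \<in> set P" using contig[of P x t z] assms by auto
    then show False using cln[OF assms(5) P(1)] assms(6) by blast
  qed
  then have "card (?X \<union> ?Y) = card ?X + card ?Y" using finSt by (intro card_Un_disjoint) auto
  moreover have "card (?X \<union> ?Y) \<le> gs p St a b" unfolding gs_def
    using assms by (intro card_mono) (use finSt in auto)
  ultimately show ?thesis unfolding gs_def by simp
qed

lemma first_seg: assumes "a < b" "b \<le> length p" "m \<le> fc p Cl a b"
  shows "\<exists>j. a < j \<and> j \<le> b \<and> fc p Cl a j = m"
proof -
  define j where "j = (LEAST j. m \<le> fc p Cl a j)"
  have mj: "m \<le> fc p Cl a j" unfolding j_def by (rule LeastI[of _ b]) (rule assms(3))
  have jb: "j \<le> b" unfolding j_def by (rule Least_le) (rule assms(3))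
  have aj: "a < j"
  proof (rule ccontr)
    assume "\<not> a < j" then have "fc p Cl a j = 0" by (intro fc_empty) simp
    then show False using mj m1 by simp
  qed
  have lt: "fc p Cl a (j - 1) < m"
    using not_less_Least[of "j - 1" "\<lambda>j. m \<le> fc p Cl a j"] aj unfolding j_def[symmetric] by simp
  have "fc p Cl a j \<le> fc p Cl a (j-1) + fc p Cl (j-1) j" using aj by (intro fc_split) auto
  also have "fc p Cl (j-1) j \<le> 1" using fc_single[of "j-1"] aj by simp
  finally show ?thesis using mj lt aj jb by (intro exI[of _ j]) auto
qed

lemma gap: assumes "j < b" "b \<le> length p" "1 \<le> fc p Cl j b"
  shows "\<exists>t. j \<le> t \<and> t < b \<and> (\<exists>C\<in>Cl. p!t \<in> C) \<and> fc p Cl j b \<le> 1 + fc p Cl (Suc t) b"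
proof -
  define t where "t = (LEAST t. 1 \<le> fc p Cl j (Suc t))"
  have ex: "1 \<le> fc p Cl j (Suc (b - 1))" using assms by simp
  have mt: "1 \<le> fc p Cl j (Suc t)" unfolding t_def by (rule LeastI) (rule ex)
  have tb: "t \<le> b - 1" unfolding t_def by (rule Least_le) (rule ex)
  have jt: "j \<le> t"
  proof (rule ccontr)
    assume "\<not> j \<le> t" then have "fc p Cl j (Suc t) = 0" by (intro fc_empty) simp
    then show False using mt by simp
  qed
  have z: "fc p Cl j t = 0"
  proof (cases t)
    case 0 then show ?thesis by (intro fc_empty) simp
  next
    case (Suc t')
    then have "\<not> 1 \<le> fc p Cl j (Suc t')"
      using not_less_Least[of t' "\<lambda>t. 1 \<le> fc p Cl j (Suc t)"] unfolding t_def[symmetric] by simp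
    then show ?thesis using Suc by simp
  qed
  have "fc p Cl j (Suc t) \<le> fc p Cl j t + fc p Cl t (Suc t)" using jt by (intro fc_split) auto
  then have "1 \<le> fc p Cl t (Suc t)" using z mt by simp
  then obtain C where "C \<in> Cl" "p!t \<in> C" using fc_single_pos by blast
  moreover have "fc p Cl j b \<le> fc p Cl j (Suc t) + fc p Cl (Suc t) b" using jt tb assms by (intro fc_split) auto
  moreover have "fc p Cl j (Suc t) \<le> 1" using \<open>fc p Cl j (Suc t) \<le> fc p Cl j t + fc p Cl t (Suc t)\<close> z fc_single[of t] by simp
  ultimately show ?thesis using jt tb assms by (intro exI[of _ t]) auto
qed

lemma claim1: "a \<le> b \<Longrightarrow> b \<le> length p \<Longrightarrow>
  int (d+2) * (int (fc p Cl a b) + 1 - int m - int (gs p St a b)) \<le> int (m+1) * int (b - a)"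
proof (induction "b - a" arbitrary: a rule: less_induct)
  case less
  define F where "F = fc p Cl a b"
  define s where "s = gs p St a b"
  show ?case
  proof (cases "F + 1 \<le> m + s")
    case True
    then have "int F + 1 - int m - int s \<le> 0" by simp
    then have "int (d+2) * (int F + 1 - int m - int s) \<le> 0" by (simp add: mult_nonneg_nonpos)
    moreover have "0 \<le> int (m+1) * int (b - a)" by simp
    ultimately show ?thesis unfolding F_def s_def by linarith
  next
    case False
    then have Fm: "m \<le> F" by simp
    have ab: "a < b"
    proof (rule ccontr)
      assume "\<not> a < b" then have "F = 0" unfolding F_def by (intro fc_empty) simp
      then show False using Fm m1 by simp
    qed
    obtain j where j: "a < j" "j \<le> b" "fc p Cl a j = m" using first_seg[OF ab less(3)] Fm unfolding F_def by blast
    have gAs: "gs p St a j \<le> s" unfolding s_def by (rule gs_mono) (use j in auto)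
    have goodA: "gs p St a j \<le> m \<Longrightarrow> d + 2 \<le> j - a" using key[of a j] j less(3) by simp
    show ?thesis
    proof (cases "j = b \<or> fc p Cl j b = 0")
      case True
      have "F \<le> fc p Cl a j + fc p Cl j b" unfolding F_def by (rule fc_split) (use j in auto)
      moreover have "fc p Cl j b = 0" using True fc_empty by auto
      ultimately have "F = m" using j Fm by simp
      show ?thesis
      proof (cases "gs p St a j \<le> m")
        case True
        then have "d + 2 \<le> b - a" using goodA j by simp
        moreover have "int F + 1 - int m - int s \<le> 1" using \<open>F = m\<close> by simp
        ultimately have "int (d+2) * (int F + 1 - int m - int s) \<le> int (d+2) * 1"
          by (intro mult_left_mono) auto
        also have "\<dots> \<le> int (m+1) * int (b - a)"
        proof -
          have "(m+1)*(b-a) = (b-a) + m*(b-a)" by simp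
          then have "d + 2 \<le> (m+1)*(b-a)" using \<open>d + 2 \<le> b - a\<close> by linarith
          then have "int (d+2) \<le> int ((m+1)*(b-a))" by (simp only: of_nat_le_iff)
          then show ?thesis by (simp only: of_nat_mult mult_1_right)
        qed
        finally show ?thesis unfolding F_def s_def .
      next
        case False
        then have "int F + 1 - int m - int s \<le> 0" using \<open>F = m\<close> gAs by simp
        then have "int (d+2) * (int F + 1 - int m - int s) \<le> 0" by (simp add: mult_nonneg_nonpos)
        moreover have "0 \<le> int (m+1) * int (b - a)" by simp
        ultimately show ?thesis unfolding F_def s_def by linarith
      qed
    next
      case False
      then have jb: "j < b" and f1: "1 \<le> fc p Cl j b" using j by auto
      obtain t C where t: "j \<le> t" "t < b" "C \<in> Cl" "p!t \<in> C" "fc p Cl j b \<le> 1 + fc p Cl (Suc t) b"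
        using gap[OF jb less(3) f1] by blast
      define fR where "fR = fc p Cl (Suc t) b"
      define gR where "gR = gs p St (Suc t) b"
      have IH: "int (d+2) * (int fR + 1 - int m - int gR) \<le> int (m+1) * int (b - Suc t)"
        unfolding fR_def gR_def using t j less(2,3) by (intro less(1)[of "Suc t"]) auto
      have "F \<le> fc p Cl a j + fc p Cl j b" unfolding F_def by (rule fc_split) (use j in auto)
      then have FF: "F \<le> m + 1 + fR" using j t fR_def by simp
      have SS: "gs p St a j + gR \<le> s" unfolding gR_def s_def by (rule gs_disj) (use t j less(2,3) in auto)
      show ?thesis
      proof (cases "gs p St a j \<le> m")
        case True
        then have A: "d + 2 \<le> j - a" using goodA by simp
        have "int F + 1 - int m - int s \<le> (int fR + 1 - int m - int gR) + int (m+1)" using FF SS by simp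
        then have "int (d+2) * (int F + 1 - int m - int s) \<le> int (d+2) * ((int fR + 1 - int m - int gR) + int (m+1))"
          by (intro mult_left_mono) auto
        also have "\<dots> = int (d+2) * (int fR + 1 - int m - int gR) + int (d+2) * int (m+1)"
          by (simp only: distrib_left)
        also have "\<dots> \<le> int (m+1) * int (b - Suc t) + int (m+1) * int (j - a)"
          using IH A by (intro add_mono) (auto simp: mult.commute)
        also have "\<dots> = int (m+1) * int (b - Suc t + (j - a))" by (simp add: distrib_left)
        also have "\<dots> \<le> int (m+1) * int (b - a)" using t j by (intro mult_left_mono) auto
        finally show ?thesis unfolding F_def s_def .
      next
        case False
        have "int F + 1 - int m - int s \<le> int fR + 1 - int m - int gR" using FF SS False by simp
        then have "int (d+2) * (int F + 1 - int m - int s) \<le> int (d+2) * (int fR + 1 - int m - int gR)"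
          by (intro mult_left_mono) auto
        also have "\<dots> \<le> int (m+1) * int (b - Suc t)" by (rule IH)
        also have "\<dots> \<le> int (m+1) * int (b - a)" using t j by (intro mult_left_mono) auto
        finally show ?thesis unfolding F_def s_def .
      qed
    qed
  qed
qed

lemma claim2: "a \<le> b \<Longrightarrow> b \<le> length p \<Longrightarrow> m \<le> fc p Cl a b \<Longrightarrow>
  gs p St a b \<le> max m (fc p Cl a b - m) \<Longrightarrow> d + 2 \<le> b - a"
proof (induction "b - a" arbitrary: a rule: less_induct)
  case less
  define F where "F = fc p Cl a b"
  define s where "s = gs p St a b"
  have Fm: "m \<le> F" using less(4) F_def by simp
  have ab: "a < b"
  proof (rule ccontr)
    assume "\<not> a < b" then have "F = 0" unfolding F_def by (intro fc_empty) simp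
    then show False using Fm m1 by simp
  qed
  obtain j where j: "a < j" "j \<le> b" "fc p Cl a j = m" using first_seg[OF ab less(3)] Fm unfolding F_def by blast
  have gAs: "gs p St a j \<le> s" unfolding s_def by (rule gs_mono) (use j in auto)
  have goodA: "gs p St a j \<le> m \<Longrightarrow> d + 2 \<le> j - a" using key[of a j] j less(3) by simp
  show ?case
  proof (cases "gs p St a j \<le> m")
    case True then show ?thesis using goodA j by simp
  next
    case False
    then have sF: "s \<le> F - m" "m < s" using gAs less(5) F_def s_def by auto
    show ?thesis
    proof (cases "j = b \<or> fc p Cl j b = 0")
      case True
      have "F \<le> fc p Cl a j + fc p Cl j b" unfolding F_def by (rule fc_split) (use j in auto)
      moreover have "fc p Cl j b = 0" using True fc_empty by auto
      ultimately have "F = m" using j Fm by simp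
      then show ?thesis using sF by simp
    next
      case False
      then have jb: "j < b" and f1: "1 \<le> fc p Cl j b" using j by auto
      obtain t C where t: "j \<le> t" "t < b" "C \<in> Cl" "p!t \<in> C" "fc p Cl j b \<le> 1 + fc p Cl (Suc t) b"
        using gap[OF jb less(3) f1] by blast
      define fR where "fR = fc p Cl (Suc t) b"
      define gR where "gR = gs p St (Suc t) b"
      have "F \<le> fc p Cl a j + fc p Cl j b" unfolding F_def by (rule fc_split) (use j in auto)
      then have FF: "F \<le> m + 1 + fR" using j t fR_def by simp
      have SS: "gs p St a j + gR \<le> s" unfolding gR_def s_def by (rule gs_disj) (use t j less(2,3) in auto)
      have h: "m + gR \<le> fR" using FF SS sF \<open>\<not> gs p St a j \<le> m\<close> by linarith
      have "d + 2 \<le> b - Suc t"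
      proof (rule less(1)[of "Suc t"])
        show "b - Suc t < b - a" using t j by simp
        show "Suc t \<le> b" using t by simp
        show "b \<le> length p" by (rule less(3))
        show "m \<le> fc p Cl (Suc t) b" using h fR_def by simp
        show "gs p St (Suc t) b \<le> max m (fc p Cl (Suc t) b - m)" using h fR_def gR_def by simp
      qed
      then show ?thesis using t j by simp
    qed
  qed
qed

end


lemma walk_gdist: "walk V E q \<Longrightarrow> gdist V E (hd q) (last q) \<le> enat (length q - 1)"
  unfolding gdist_def by (rule INF_lower2[of q]) auto

lemma sub_len: "b \<le> length p \<Longrightarrow> length (take (b-a) (drop a p)) = b - a"
  by simp

lemma sub_nth: "b \<le> length p \<Longrightarrow> i < b - a \<Longrightarrow> take (b-a) (drop a p) ! i = p ! (a + i)"
  by simp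

lemma sub_walk: assumes "walk V E p" "a < b" "b \<le> length p"
  shows "walk V E (take (b-a) (drop a p))"
  unfolding walk_def
proof (intro conjI allI impI)
  show "take (b - a) (drop a p) \<noteq> []" using assms by simp
  show "set (take (b - a) (drop a p)) \<subseteq> V" using assms(1) unfolding walk_def
    by (meson order_trans set_drop_subset set_take_subset)
  fix i assume i: "Suc i < length (take (b - a) (drop a p))"
  then have "Suc (a + i) < length p" using assms by simp
  then have "E (p ! (a+i)) (p ! Suc (a+i))" using assms(1) unfolding walk_def by blast
  then show "E (take (b - a) (drop a p) ! i) (take (b - a) (drop a p) ! Suc i)"
    using i assms by simp
qed

lemma sub_hd: "a < b \<Longrightarrow> b \<le> length p \<Longrightarrow> hd (take (b-a) (drop a p)) = p!a"
  by (simp add: hd_conv_nth)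

lemma sub_last: "a < b \<Longrightarrow> b \<le> length p \<Longrightarrow> last (take (b-a) (drop a p)) = p!(b-1)"
  by (simp add: last_conv_nth)

lemma sub_set: assumes "b \<le> length p" shows "set (take (b-a) (drop a p)) = (\<lambda>i. p!i) ` {a..<b}"
proof
  show "set (take (b-a) (drop a p)) \<subseteq> (\<lambda>i. p!i) ` {a..<b}"
  proof
    fix x assume "x \<in> set (take (b-a) (drop a p))"
    then obtain i where "i < length (take (b-a) (drop a p))" "x = take (b-a) (drop a p) ! i"
      by (metis in_set_conv_nth)
    then have "i < b - a" "x = p ! (a+i)" using assms by auto
    then show "x \<in> (\<lambda>i. p!i) ` {a..<b}" by force
  qed
  show "(\<lambda>i. p!i) ` {a..<b} \<subseteq> set (take (b-a) (drop a p))"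
  proof
    fix x assume "x \<in> (\<lambda>i. p!i) ` {a..<b}"
    then obtain i where i: "i \<in> {a..<b}" "x = p!i" by blast
    then have "a \<le> i" "i < b" by auto
    then have h: "i - a < b - a" "a + (i - a) = i" by linarith+
    then have "take (b-a) (drop a p) ! (i - a) = x" using assms i(2) by (simp only: nth_take nth_drop)
    moreover have "i - a < length (take (b-a) (drop a p))" using h(1) assms by simp
    ultimately show "x \<in> set (take (b-a) (drop a p))" by (metis nth_mem)
  qed
qed

lemma cluster_disj: assumes "cluster_output V E e Cs" "C1 \<in> Cs" "C2 \<in> Cs" "x \<in> C1" "x \<in> C2"
  shows "C1 = C2"
proof -
  obtain cl where cl: "\<forall>i < length cl. \<exists>u N.
        u \<in> V - \<Union>(set (take i cl)) \<and>
        N \<subseteq> {w \<in> V. E u w} - \<Union>(set (take i cl)) \<and> card N = e - 1 \<and>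
        cl ! i = insert u N" "Cs = set cl"
    using assms(1) unfolding cluster_output_def by blast
  have nd: "x \<notin> cl ! i \<or> x \<notin> cl ! j" if "i < j" "j < length cl" for i j
  proof -
    obtain u N where uN: "u \<in> V - \<Union>(set (take j cl))" "N \<subseteq> {w \<in> V. E u w} - \<Union>(set (take j cl))"
      "cl ! j = insert u N" using cl(1)[rule_format, OF \<open>j < length cl\<close>] by blast
    have "take j cl ! i \<in> set (take j cl)" by (rule nth_mem) (use that in simp)
    then have "cl ! i \<in> set (take j cl)" using that by simp
    then have A: "cl!i \<subseteq> \<Union>(set (take j cl))" by blast
    have "cl!j \<inter> \<Union>(set (take j cl)) = {}" using uN by auto
    then show ?thesis using A by blast
  qed
  obtain i where i: "i < length cl" "C1 = cl ! i" using assms(2) cl(2) by (metis in_set_conv_nth)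
  obtain j where j: "j < length cl" "C2 = cl ! j" using assms(3) cl(2) by (metis in_set_conv_nth)
  show ?thesis
  proof (cases i j rule: linorder_cases)
    case less then show ?thesis using nd[of i j] i j assms by auto
  next
    case equal then show ?thesis using i j by simp
  next
    case greater then show ?thesis using nd[of j i] i j assms by auto
  qed
qed

lemma final_arith:
  fixes k m d L s :: nat
  assumes m1: "1 \<le> m" and mk: "m \<le> k" and sk: "2 * s < k" and L2: "d + 2 \<le> L"
    and c1: "int (d+2) * (int k + 1 - int m - int s) \<le> int (m+1) * int L"
  shows "k * d \<le> 8 * m * (L - 1)"
proof (cases "k < 4 * m")
  case True
  have "k * d \<le> 4 * m * d" using True by simp
  also have "\<dots> \<le> 4 * m * (2 * (L - 1))" using L2 by (intro mult_left_mono) auto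
  also have "\<dots> = 8 * m * (L - 1)" by simp
  finally show ?thesis .
next
  case False
  define X where "X = int k + 1 - int m - int s"
  have i1: "2 * int s < int k" using sk by simp
  have i2: "4 * int m \<le> int k" using False by simp
  have i3: "4 * X = 4 * int k + 4 - 4 * int m - 4 * int s" unfolding X_def by simp
  have i4: "2 * int s \<le> int k - 1" using i1 by linarith
  have X4: "4 * X \<ge> int k + 6" using i2 i3 i4 by linarith
  have "int (d+2) * (int k + 6) \<le> int (d+2) * (4 * X)" using X4 by (intro mult_left_mono) auto
  also have "\<dots> = 4 * (int (d+2) * X)" by simp
  also have "\<dots> \<le> 4 * (int (m+1) * int L)" using c1 unfolding X_def by simp
  finally have A: "int (d+2) * (int k + 6) \<le> 4 * (int (m+1) * int L)" .
  have B: "int L \<le> int m * int L" using mult_right_mono[of 1 "int m" "int L"] m1 by simp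
  have C: "int (d+2) * (int k + 6) = int k * int d + 2 * int k + 6 * int d + 12" by (simp add: algebra_simps)
  have D: "4 * (int (m+1) * int L) = 4 * (int m * int L) + 4 * int L" by (simp add: algebra_simps)
  have "int k * int d \<le> 8 * (int m * int L) - 8 * int m" using A B C D False by linarith
  also have "\<dots> = int (8 * m * (L - 1))" using L2 by (simp add: algebra_simps of_nat_diff)
  finally show ?thesis by (simp only: of_nat_mult[symmetric] of_nat_le_iff)
qed

theorem lemma3:
  shows "\<exists>c::real. c > 0 \<and>
    (\<forall>V E rho (e::nat) (d::nat) (m::nat) Cs S u v (k::nat).
      sgraph V E \<and> sp_system V E rho \<and> e \<ge> 1 \<and> d \<ge> 1 \<and> m \<ge> 1 \<and> m \<le> k \<and>
      cluster_output V E e Cs \<and> strips_output V E rho Cs d m S \<and>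
      u \<in> V \<and> v \<in> V \<and>
      card {C \<in> Cs. C \<inter> set (rho u v) \<noteq> {} \<and> clean S C} = k \<and>
      real (card {P \<in> S. set P \<inter> set (rho u v) \<noteq> {}}) < real k / 2
      \<longrightarrow> (\<forall>l. gdist V E u v = enat l \<longrightarrow> real l \<ge> c * real k * real d / real m))"
proof (intro exI[of _ "1/8"] conjI allI impI)
  show "(0::real) < 1/8" by simp
  fix V E rho e d m Cs S u v k l
  assume H: "sgraph V E \<and> sp_system V E rho \<and> e \<ge> 1 \<and> d \<ge> 1 \<and> m \<ge> 1 \<and> m \<le> k \<and>
      cluster_output V E e Cs \<and> strips_output V E rho Cs d m S \<and>
      u \<in> V \<and> v \<in> V \<and>
      card {C \<in> Cs. C \<inter> set (rho u v) \<noteq> {} \<and> clean S C} = k \<and>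
      real (card {P \<in> S. set P \<inter> set (rho u v) \<noteq> {}}) < real k / 2"
    and gl: "gdist V E u v = enat l"
  have sps: "sp_system V E rho" and m1: "m \<ge> 1" and mk: "m \<le> k" and clo: "cluster_output V E e Cs"
    and sto: "strips_output V E rho Cs d m S" and uV: "u \<in> V" and vV: "v \<in> V"
    and kdef: "card {C \<in> Cs. C \<inter> set (rho u v) \<noteq> {} \<and> clean S C} = k"
    and sreal: "real (card {P \<in> S. set P \<inter> set (rho u v) \<noteq> {}}) < real k / 2"
    using H by auto
  obtain sl where sl: "\<forall>i < length sl. \<exists>u v. strip_addable V E rho Cs d m (set (take i sl)) u v \<and> sl ! i = rho u v"
    "\<not> (\<exists>u v. strip_addable V E rho Cs d m (set sl) u v)" "S = set sl"
    using sto unfolding strips_output_def by blast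
  have finCs: "finite Cs" using clo unfolding cluster_output_def by auto
  define p where "p = rho u v"
  have sp_at: "walk V E (rho x y) \<and> hd (rho x y) = x \<and> last (rho x y) = y \<and>
        enat (length (rho x y) - 1) = gdist V E x y \<and>
        rho y x = rev (rho x y) \<and>
        (\<forall>i j. i \<le> j \<and> j < length (rho x y) \<longrightarrow>
           rho (rho x y ! i) (rho x y ! j) = take (Suc (j - i)) (drop i (rho x y)))"
    if "x \<in> V" "y \<in> V" "gdist V E x y \<noteq> \<infinity>" for x y
    using sps that unfolding sp_system_def by blast
  have pu: "walk V E p" "enat (length p - 1) = gdist V E u v"
    and SP: "\<And>i j. i \<le> j \<Longrightarrow> j < length p \<Longrightarrow> rho (p ! i) (p ! j) = take (Suc (j - i)) (drop i p)"
    using sp_at[OF uV vV] gl unfolding p_def by auto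
  have pV: "set p \<subseteq> V" and pne: "p \<noteq> []" using pu(1) unfolding walk_def by auto
  have lL: "l = length p - 1" using pu(2) gl by simp
  define Cl where "Cl = {C \<in> Cs. clean S C}"
  have rho_sub: "rho (p!a) (p!(b-1)) = take (b-a) (drop a p)" if "a < b" "b \<le> length p" for a b
  proof -
    have "rho (p!a) (p!(b-1)) = take (Suc (b - 1 - a)) (drop a p)" using that by (intro SP) auto
    moreover have "Suc (b - 1 - a) = b - a" using that by simp
    ultimately show ?thesis by simp
  qed
  have gd_sub: "gdist V E (p!a) (p!(b-1)) \<le> enat (b - a - 1)" if "a < b" "b \<le> length p" for a b
    using walk_gdist[OF sub_walk[OF pu(1) that]] unfolding sub_hd[OF that] sub_last[OF that] sub_len[OF that(2)] .
  interpret pc p Cl S m d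
  proof
    show "finite Cl" unfolding Cl_def using finCs by simp
    show "finite S" using sl(3) by simp
    show "C1 = C2" if "C1 \<in> Cl" "C2 \<in> Cl" "x \<in> C1" "x \<in> C2" for C1 C2 x
      using cluster_disj[OF clo, of C1 C2 x] that unfolding Cl_def by auto
    show "C \<inter> set P = {}" if "C \<in> Cl" "P \<in> S" for C P
      using that unfolding Cl_def clean_def by auto
    show "m \<ge> 1" by (rule m1)
    show "p ! y \<in> set P" if P: "P \<in> S" "x < y" "y < z" "z < length p" "p ! x \<in> set P" "p ! z \<in> set P"
      for P x y z
    proof -
      obtain i where "i < length sl" "sl ! i = P" using P(1) sl(3) by (metis in_set_conv_nth)
      then obtain u' v' where uv': "strip_addable V E rho Cs d m (set (take i sl)) u' v'" "P = rho u' v'"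
        using sl(1) by metis
      have u'V: "u' \<in> V" and v'V: "v' \<in> V" and gd': "gdist V E u' v' \<le> enat d"
        using uv'(1) unfolding strip_addable_def by auto
      have "gdist V E u' v' \<noteq> \<infinity>"
      proof
        assume "gdist V E u' v' = \<infinity>" then show False using gd' by simp
      qed
      then have SPP: "\<And>i j. i \<le> j \<Longrightarrow> j < length P \<Longrightarrow> rho (P ! i) (P ! j) = take (Suc (j - i)) (drop i P)"
        using sp_at[OF u'V v'V] uv'(2) by auto
      obtain i' where i': "i' < length P" "P ! i' = p ! x" using P(5) by (metis in_set_conv_nth)
      obtain j' where j': "j' < length P" "P ! j' = p ! z" using P(6) by (metis in_set_conv_nth)
      have w: "rho (p!x) (p!z) = take (Suc (z - x)) (drop x p)" using P by (intro SP) auto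
      have "take (Suc (z - x)) (drop x p) ! (y - x) = p ! y" using P by simp
      moreover have "y - x < length (take (Suc (z - x)) (drop x p))" using P by simp
      ultimately have yin: "p ! y \<in> set (rho (p!x) (p!z))" unfolding w by (metis nth_mem)
      have xV: "p!x \<in> V" and zV: "p!z \<in> V" using pV P by auto
      have "gdist V E (p!x) (p!(Suc z - 1)) \<le> enat (Suc z - x - 1)" using P by (intro gd_sub) auto
      then have "gdist V E (p!x) (p!z) \<le> enat (Suc z - x - 1)" using P by simp
      then have "gdist V E (p!x) (p!z) \<noteq> \<infinity>" by (metis enat_ord_simps(5) infinity_ileE)
      then have rv: "rho (p!z) (p!x) = rev (rho (p!x) (p!z))" using sp_at[OF xV zV] by blast
      show ?thesis
      proof (cases "i' \<le> j'")
        case True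
        then have "rho (p!x) (p!z) = take (Suc (j' - i')) (drop i' P)" using SPP[of i' j'] i' j' by simp
        then have "set (rho (p!x) (p!z)) \<subseteq> set P"
          by (metis order_trans set_drop_subset set_take_subset)
        then show ?thesis using yin by blast
      next
        case False
        then have "rho (p!z) (p!x) = take (Suc (i' - j')) (drop j' P)" using SPP[of j' i'] i' j' by simp
        then have "set (rho (p!z) (p!x)) \<subseteq> set P"
          by (metis order_trans set_drop_subset set_take_subset)
        then show ?thesis using yin unfolding rv set_rev by blast
      qed
    qed
    show "d + 2 \<le> b - a" if ab: "a < b" "b \<le> length p" "fc p Cl a b = m" "gs p S a b \<le> m" for a b
    proof (rule ccontr)
      assume "\<not> d + 2 \<le> b - a"
      then have bad: "b - a - 1 \<le> d" by simp
      define x where "x = p!a"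
      define y where "y = p!(b-1)"
      have rq: "rho x y = take (b-a) (drop a p)" unfolding x_def y_def by (rule rho_sub[OF ab(1,2)])
      have setq: "set (rho x y) = (\<lambda>i. p!i) ` {a..<b}" unfolding rq by (rule sub_set[OF ab(2)])
      have xV: "x \<in> V" and yV: "y \<in> V" unfolding x_def y_def using pV ab by auto
      have "gdist V E x y \<le> enat (b - a - 1)" unfolding x_def y_def by (rule gd_sub[OF ab(1,2)])
      also have "\<dots> \<le> enat d" using bad by simp
      finally have gxy: "gdist V E x y \<le> enat d" .
      have e1: "{P \<in> set sl. set (rho x y) \<inter> set P \<noteq> {}} = {P \<in> S. set P \<inter> (\<lambda>i. p!i) ` {a..<b} \<noteq> {}}"
        unfolding setq sl(3) by blast
      have e2: "{C \<in> Cs. C \<inter> set (rho x y) \<noteq> {} \<and> (\<forall>P\<in>set sl. C \<inter> set P = {})} = {C \<in> Cl. C \<inter> (\<lambda>i. p!i) ` {a..<b} \<noteq> {}}"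
        unfolding setq Cl_def clean_def sl(3) by blast
      have "strip_addable V E rho Cs d m (set sl) x y"
        unfolding strip_addable_def e1 e2 using xV yV gxy ab(3,4) unfolding fc_def gs_def by simp
      then show False using sl(2) by blast
    qed
  qed
  have setp: "(\<lambda>i. p!i) ` {0..<length p} = set p" using sub_set[of "length p" p 0] by simp
  have kfc: "fc p Cl 0 (length p) = k" unfolding fc_def setp Cl_def kdef[symmetric] p_def
    by (rule arg_cong[where f=card]) (use setp[unfolded p_def] in auto)
  define s where "s = gs p S 0 (length p)"
  have sdef: "s = card {P \<in> S. set P \<inter> set (rho u v) \<noteq> {}}" unfolding s_def gs_def using setp p_def by simp
  have sk: "2 * s < k" using sreal unfolding sdef[symmetric] by linarith
  have c2: "d + 2 \<le> length p"
    using claim2[of 0 "length p"] kfc mk sk unfolding s_def[symmetric] by simp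
  have c1: "int (d+2) * (int k + 1 - int m - int s) \<le> int (m+1) * int (length p)"
    using claim1[of 0 "length p"] kfc unfolding s_def[symmetric] by simp
  have nat_ineq: "k * d \<le> 8 * m * l"
    unfolding lL by (rule final_arith[OF m1 mk sk c2 c1])
  then have "real k * real d \<le> 8 * real m * real l"
    by (metis of_nat_le_iff of_nat_mult of_nat_numeral)
  moreover have "real m > 0" using m1 by simp
  ultimately show "1/8 * real k * real d / real m \<le> real l"
    by (simp add: divide_le_eq mult.commute mult.left_commute)
qed

end
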